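(* Let $P\subseteq\mathbb{R}^n$ be an $n$-dimensional rational polytope and let $\pi_P:\mathbb{R}^n\to\mathbb{R}^n/K(P)$ be its natural projection. Then $Q:=\pi_P(P)$ is a rational polytope (with respect to the lattice $\mathbb{Z}^n/(K(P)\cap\mathbb{Z}^n)$) satisfying $\mu(Q)\ge\mu(P)$. Moreover, if $\mu(Q)=\mu(P)$, then $\mathrm{core}(Q)$ is the point $\pi_P(\mathrm{core}(P))$.
   Context: For a full-dimensional rational polytope $R$ in a real vector space with lattice $\Lambda$, write $R$ irredundantly as $\{x:\langle a_i,x\rangle\ge b_i\}$ with $a_i$ primitive in the dual lattice $\Lambda^*$, $b_i\in\mathbb{Q}$, each inequality defining a facet; set $d_R(x):=\min_i(\langle a_i,x\rangle-b_i)$, $R^{(s)}:=\{x:d_R(x)\ge s\}$, $\mu(R):=(\sup\{s>0:R^{(s)}\neq\emptyset\})^{-1}$ ($\mathbb{Q}$-codegree), $\mathrm{core}(R):=R^{(1/\mu(R))}$. For $P$ (with lattice $\mathbb{Z}^n$), $K(P)$ is the linear subspace parallel to the affine hull of $\mathrm{core}(P)$, and the natural projection is the quotient map $\pi_P:\mathbb{R}^n\to\mathbb{R}^n/K(P)$; $Q$ is considered with respect to the lattice $\mathbb{Z}^n/(K(P)\cap\mathbb{Z}^n)$. *)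

theory Defs
  imports "HOL-Analysis.Analysis"
begin

text \<open>Linear functionals are represented by vectors via the inner product, so the
  pairing \<open>\<langle>a,x\<rangle>\<close> is \<open>a \<bullet> x\<close>.\<close>

definition int_lattice :: "(real^'n) set" where
  "int_lattice = {x. \<forall>i. x $ i \<in> \<int>}"

definition dual_lattice :: "'a::euclidean_space set \<Rightarrow> 'a set" where
  "dual_lattice L = {a. \<forall>x\<in>L. a \<bullet> x \<in> \<int>}"

definition primitive_in :: "'a::euclidean_space set \<Rightarrow> 'a \<Rightarrow> bool" where
  "primitive_in M a \<longleftrightarrow> a \<in> M \<and> a \<noteq> 0 \<and>
     (\<forall>b\<in>M. \<forall>k::int. a = of_int k *\<^sub>R b \<longrightarrow> \<bar>k\<bar> = 1)"

text \<open>Rational polytope w.r.t. lattice L: convex hull of finitely many points of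
  \<open>L \<otimes> \<rat>\<close>.\<close>
definition rational_polytope :: "'a::euclidean_space set \<Rightarrow> 'a set \<Rightarrow> bool" where
  "rational_polytope L R \<longleftrightarrow>
     (\<exists>S. finite S \<and> R = convex hull S \<and> (\<forall>v\<in>S. \<exists>k::nat. k > 0 \<and> real k *\<^sub>R v \<in> L))"

definition is_facet :: "'a::euclidean_space set \<Rightarrow> 'a set \<Rightarrow> bool" where
  "is_facet F R \<longleftrightarrow> F face_of R \<and> aff_dim F = aff_dim R - 1"

definition facet_ineqs :: "'a::euclidean_space set \<Rightarrow> 'a set \<Rightarrow> ('a \<times> real) set" where
  "facet_ineqs L R = {(a, b). primitive_in (dual_lattice L) a \<and> (\<forall>x\<in>R. a \<bullet> x \<ge> b) \<and>
       is_facet {x\<in>R. a \<bullet> x = b} R}"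

definition lattice_dist :: "'a::euclidean_space set \<Rightarrow> 'a set \<Rightarrow> 'a \<Rightarrow> real" where
  "lattice_dist L R x = Min ((\<lambda>(a, b). a \<bullet> x - b) ` facet_ineqs L R)"

definition shrink :: "'a::euclidean_space set \<Rightarrow> 'a set \<Rightarrow> real \<Rightarrow> 'a set" where
  "shrink L R s = {x. lattice_dist L R x \<ge> s}"

definition qcodegree :: "'a::euclidean_space set \<Rightarrow> 'a set \<Rightarrow> real" where
  "qcodegree L R = inverse (Sup {s. s > 0 \<and> shrink L R s \<noteq> {}})"

definition core :: "'a::euclidean_space set \<Rightarrow> 'a set \<Rightarrow> 'a set" where
  "core L R = shrink L R (1 / qcodegree L R)"

definition core_dir :: "(real^'n) set \<Rightarrow> (real^'n) set" where
  "core_dir P = {x - y | x y. x \<in> affine hull (core int_lattice P) \<and> y \<in> affine hull (core int_lattice P)}"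

end

theory Submission
  imports Defs
begin


interpretation rv: vector_space "\<lambda>(q::rat) (x::real). of_rat q * x"
  by unfold_locales (auto simp: algebra_simps of_rat_add of_rat_mult)

lemma rat_functional:
  fixes c :: real assumes "c \<noteq> 0"
  obtains \<phi> :: "real \<Rightarrow> rat" where "\<phi> c = 1"
    "\<And>x y. \<phi> (x + y) = \<phi> x + \<phi> y" "\<And>q x. \<phi> (of_rat q * x) = q * \<phi> x"
proof -
  let ?B = "rv.extend_basis {c}"
  have ind: "rv.independent ?B" by (rule rv.independent_extend_basis) (simp add: assms)
  have sp: "\<And>x. x \<in> rv.span ?B" by (simp add: rv.independent_extend_basis assms)
  have cB: "c \<in> ?B" using rv.extend_basis_superset[of "{c}"] assms by auto
  show ?thesis
    apply (rule that[of "\<lambda>x. rv.representation ?B x c"])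
    using rv.representation_basis[OF ind cB] rv.representation_add[OF ind sp sp]
      rv.representation_scale[OF ind sp] by auto
qed


lemma phi_sum:
  fixes \<phi> :: "real \<Rightarrow> rat"
  assumes "\<And>x y. \<phi> (x + y) = \<phi> x + \<phi> y"
  shows "\<phi> (sum f A) = sum (\<lambda>i. \<phi> (f i)) A"
proof -
  have z: "\<phi> 0 = 0" using assms[of 0 0] by simp
  show ?thesis by (induction A rule: infinite_finite_induct) (auto simp: z assms)
qed

lemma rational_orth:
  fixes a :: "real^'n"
  assumes "a \<noteq> 0" and rat: "\<And>d i. d \<in> D \<Longrightarrow> d $ i \<in> \<rat>"
    and orth: "\<And>d. d \<in> D \<Longrightarrow> a \<bullet> d = 0"
  obtains u where "u \<noteq> 0" "\<And>i. u $ i \<in> \<rat>" "\<And>d. d \<in> D \<Longrightarrow> u \<bullet> d = 0"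
proof -
  obtain k where k: "a $ k \<noteq> 0" using assms(1) by (metis vec_eq_iff zero_index)
  obtain \<phi> :: "real \<Rightarrow> rat" where p1: "\<phi> (a$k) = 1"
    and padd: "\<And>x y. \<phi> (x + y) = \<phi> x + \<phi> y" and psc: "\<And>q x. \<phi> (of_rat q * x) = q * \<phi> x"
    using rat_functional[OF k] by blast
  define u :: "real^'n" where "u = (\<chi> i. of_rat (\<phi> (a $ i)))"
  show ?thesis
  proof (rule that[of u])
    show "u \<noteq> 0" using p1 by (metis u_def vec_lambda_beta zero_index of_rat_1 one_neq_zero)
    show "u $ i \<in> \<rat>" for i by (simp add: u_def)
    fix d assume d: "d \<in> D"
    have "\<forall>i. \<exists>q. d $ i = of_rat q" using rat[OF d] by (metis Rats_cases)
    then obtain q where q: "\<And>i. d $ i = of_rat (q i)" by metis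
    have "0 = \<phi> (a \<bullet> d)" using orth[OF d] padd[of 0 0] by simp
    also have "a \<bullet> d = (\<Sum>i\<in>UNIV. of_rat (q i) * a $ i)"
      by (simp add: inner_vec_def q mult.commute)
    also have "\<phi> \<dots> = (\<Sum>i\<in>UNIV. q i * \<phi> (a $ i))"
      by (simp add: phi_sum[OF padd] psc)
    finally have "(\<Sum>i\<in>UNIV. q i * \<phi> (a $ i)) = 0" by simp
    then have "of_rat (\<Sum>i\<in>UNIV. q i * \<phi> (a $ i)) = (0::real)" by simp
    then show "u \<bullet> d = 0"
      by (simp add: inner_vec_def u_def q of_rat_sum of_rat_mult mult.commute)
  qed
qed


lemma hyperplane_eq_prop:
  fixes a a' :: "'a::euclidean_space"
  assumes "a \<noteq> 0" "{x. a \<bullet> x = b} = {x. a' \<bullet> x = b'}"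
  shows "\<exists>t. a' = t *\<^sub>R a \<and> b' = t * b"
proof -
  define x0 where "x0 = (b / (a \<bullet> a)) *\<^sub>R a"
  have aa: "a \<bullet> a \<noteq> 0" using assms by simp
  have x0: "a \<bullet> x0 = b" using aa by (simp add: x0_def)
  define t where "t = (a' \<bullet> a) / (a \<bullet> a)"
  define w where "w = a' - t *\<^sub>R a"
  have aw: "a \<bullet> w = 0" using aa by (simp add: w_def t_def inner_diff_right inner_commute)
  have "a \<bullet> (x0 + w) = b" using x0 aw by (simp add: inner_add_right)
  then have "a' \<bullet> (x0 + w) = b'" using assms(2) by blast
  moreover have "a' \<bullet> x0 = b'" using x0 assms(2) by blast
  ultimately have a'w: "a' \<bullet> w = 0" by (simp add: inner_add_right)
  have "w \<bullet> w = 0" using aw a'w by (simp add: w_def inner_diff_left inner_commute)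
  then have "w = 0" by simp
  then have a': "a' = t *\<^sub>R a" by (simp add: w_def)
  have "b' = t * b" using \<open>a' \<bullet> x0 = b'\<close> x0 by (simp add: a')
  with a' show ?thesis by blast
qed

lemma affine_hull_eq_hyperplane:
  fixes G :: "'a::euclidean_space set"
  assumes "a \<noteq> 0" "G \<subseteq> {x. a \<bullet> x = b}" "aff_dim G = int DIM('a) - 1"
  shows "affine hull G = {x. a \<bullet> x = b}"
proof -
  have "G \<noteq> {}"
  proof
    assume "G = {}" then have "aff_dim G = -1" by simp
    with assms(3) DIM_positive[where 'a='a] show False by linarith
  qed
  show ?thesis
  proof (rule affine_dim_equal)
    show "affine hull G \<subseteq> {x. a \<bullet> x = b}" by (rule hull_minimal[OF assms(2)]) (simp add: affine_hyperplane)
    show "aff_dim (affine hull G) = aff_dim {x. a \<bullet> x = b}" using assms by simp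
  qed (use \<open>G \<noteq> {}\<close> affine_hyperplane in auto)
qed

lemma valid_facet_prop:
  fixes R :: "'a::euclidean_space set"
  assumes full: "aff_dim R = int DIM('a)"
    and v1: "\<forall>x\<in>R. a \<bullet> x \<ge> b" and v2: "\<forall>x\<in>R. a' \<bullet> x \<ge> b'"
    and eq: "{x\<in>R. a \<bullet> x = b} = {x\<in>R. a' \<bullet> x = b'}"
    and dim: "aff_dim {x\<in>R. a \<bullet> x = b} = aff_dim R - 1"
  shows "\<exists>t>0. a' = t *\<^sub>R a \<and> b' = t * b"
proof -
  let ?G = "{x\<in>R. a \<bullet> x = b}"
  have gne: "?G \<noteq> {}"
  proof
    assume e: "?G = {}" have "aff_dim ?G = -1" by (subst e) simp
    with dim full DIM_positive[where 'a='a] show False by linarith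
  qed
  have an: "a \<noteq> 0"
  proof
    assume "a = 0"
    with gne have "?G = R" by auto
    with dim show False by simp
  qed
  have an': "a' \<noteq> 0"
  proof
    assume "a' = 0"
    with gne eq have "?G = R" by auto
    with dim show False by simp
  qed
  have h1: "affine hull ?G = {x. a \<bullet> x = b}"
    by (rule affine_hull_eq_hyperplane[OF an]) (use dim full in auto)
  have h2: "affine hull ?G = {x. a' \<bullet> x = b'}"
    by (rule affine_hull_eq_hyperplane[OF an']) (use dim full eq in auto)
  obtain t where t: "a' = t *\<^sub>R a" "b' = t * b" using hyperplane_eq_prop[OF an] h1 h2 by metis
  have "\<not> R \<subseteq> ?G"
  proof
    assume "R \<subseteq> ?G" then have "?G = R" by auto
    with dim show False by simp
  qed
  then obtain z where z: "z \<in> R" "a \<bullet> z \<noteq> b" by auto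
  with v1 have az: "a \<bullet> z > b" by force
  have "t * (a \<bullet> z - b) \<ge> 0" using v2 z(1) t by (simp add: algebra_simps)
  then have "t \<ge> 0" using az by (simp add: zero_le_mult_iff)
  moreover have "t \<noteq> 0" using an' t by auto
  ultimately have "t > 0" by simp
  then show ?thesis using t by blast
qed


lemma dual_add: "a \<in> dual_lattice L \<Longrightarrow> b \<in> dual_lattice L \<Longrightarrow> a + b \<in> dual_lattice L"
  by (auto simp: dual_lattice_def inner_add_left)
lemma dual_neg: "a \<in> dual_lattice L \<Longrightarrow> - a \<in> dual_lattice L"
  by (auto simp: dual_lattice_def)
lemma dual_scale: "a \<in> dual_lattice L \<Longrightarrow> of_int k *\<^sub>R a \<in> dual_lattice L"
  by (auto simp: dual_lattice_def)

lemma primitive_neg: "primitive_in (dual_lattice L) a \<Longrightarrow> primitive_in (dual_lattice L) (- a)"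
  unfolding primitive_in_def
proof (intro conjI ballI allI impI)
  assume a: "a \<in> dual_lattice L \<and> a \<noteq> 0 \<and> (\<forall>b\<in>dual_lattice L. \<forall>k::int. a = of_int k *\<^sub>R b \<longrightarrow> \<bar>k\<bar> = 1)"
  then show "- a \<in> dual_lattice L" "- a \<noteq> 0" by (auto simp: dual_neg)
  fix b k assume "b \<in> dual_lattice L" "- a = of_int (k::int) *\<^sub>R b"
  then have "a = of_int (-k) *\<^sub>R b" by (metis minus_minus of_int_minus scaleR_left.minus)
  with a \<open>b \<in> dual_lattice L\<close> show "\<bar>k\<bar> = 1" by fastforce
qed

lemma prim_exists:
  assumes v: "v \<in> dual_lattice L" and l: "l \<in> L" and nz: "v \<bullet> l \<noteq> 0"
  shows "\<exists>c>0. primitive_in (dual_lattice L) (c *\<^sub>R v)"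
proof -
  define D where "D = dual_lattice L"
  define \<alpha> where "\<alpha> = v \<bullet> l"
  have \<alpha>Z: "\<alpha> \<in> \<int>" using v l by (auto simp: \<alpha>_def dual_lattice_def)
  then obtain A :: int where A: "\<alpha> = of_int A" by (metis Ints_cases)
  have A0: "A \<noteq> 0" using nz A \<alpha>_def by auto
  let ?P = "\<lambda>p::nat. p > 0 \<and> (real p / \<alpha>) *\<^sub>R v \<in> D"
  have "?P (nat \<bar>A\<bar>)"
  proof -
    have "(real (nat \<bar>A\<bar>) / \<alpha>) *\<^sub>R v = (if A > 0 then v else - v)"
      using A0 by (auto simp: A)
    then show ?thesis using A0 v dual_neg[OF v] by (auto simp: D_def)
  qed
  define p0 where "p0 = (LEAST p. ?P p)"
  have P0: "?P p0" unfolding p0_def by (rule LeastI) fact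
  have min: "\<And>q. ?P q \<Longrightarrow> p0 \<le> q" unfolding p0_def by (rule Least_le)
  define g where "g = (real p0 / \<alpha>) *\<^sub>R v"
  have vnz: "v \<noteq> 0" using nz by auto
  have gnz: "g \<noteq> 0" using P0 vnz nz by (simp add: g_def \<alpha>_def)
  have gl: "g \<bullet> l = real p0" using nz by (simp add: g_def \<alpha>_def)
  have prim: "primitive_in D g"
    unfolding primitive_in_def
  proof (intro conjI ballI allI impI)
    show "g \<in> D" "g \<noteq> 0" using P0 gnz by (auto simp: g_def)
    fix b k assume b: "b \<in> D" and gk: "g = of_int (k::int) *\<^sub>R b"
    have k0: "k \<noteq> 0" using gk gnz by auto
    have "b \<bullet> l \<in> \<int>" using b l by (auto simp: D_def dual_lattice_def)
    then obtain m :: int where m: "b \<bullet> l = of_int m" by (metis Ints_cases)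
    have p0km: "real p0 = of_int k * of_int m" using gl gk m by simp
    then have p0km': "int p0 = k * m" by (metis of_int_eq_iff of_int_mult of_int_of_nat_eq)
    have m0: "m \<noteq> 0" using p0km P0 by auto
    have bv: "b = (of_int m / \<alpha>) *\<^sub>R v"
    proof -
      have "b = (1 / of_int k) *\<^sub>R g" using gk k0 by simp
      also have "\<dots> = (of_int m / \<alpha>) *\<^sub>R v"
        using k0 p0km by (simp add: g_def field_simps)
      finally show ?thesis .
    qed
    have "?P (nat \<bar>m\<bar>)"
    proof -
      have "(real (nat \<bar>m\<bar>) / \<alpha>) *\<^sub>R v = (if m > 0 then b else - b)"
        using m0 by (auto simp: bv)
      then show ?thesis using m0 b dual_neg[of b L] by (auto simp: D_def)
    qed
    then have "p0 \<le> nat \<bar>m\<bar>" by (rule min)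
    then have "\<bar>k\<bar> * \<bar>m\<bar> \<le> \<bar>m\<bar>" using p0km' by (simp add: abs_mult[symmetric]) 
    then have "\<bar>k\<bar> \<le> 1" using m0 by (simp add: mult_le_cancel_right1)
    then show "\<bar>k\<bar> = 1" using k0 by linarith
  qed
  show ?thesis
  proof (cases "\<alpha> > 0")
    case True
    then show ?thesis using prim P0 unfolding g_def D_def by (intro exI[of _ "real p0 / \<alpha>"]) auto
  next
    case False
    then have "\<alpha> < 0" using nz \<alpha>_def by linarith
    moreover have "primitive_in D ((- (real p0 / \<alpha>)) *\<^sub>R v)"
      using primitive_neg[of L g] prim by (simp add: g_def D_def)
    ultimately show ?thesis using P0 unfolding D_def
      by (intro exI[of _ "- (real p0 / \<alpha>)"]) (auto simp: divide_less_0_iff)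
  qed
qed

lemma prim_unique:
  assumes l: "l \<in> L" and nz: "u \<bullet> l \<noteq> 0" and t: "t > 0" "t' > 0"
    and p1: "primitive_in (dual_lattice L) (t *\<^sub>R u)"
    and p2: "primitive_in (dual_lattice L) (t' *\<^sub>R u)"
  shows "t = t'"
proof -
  have "(t *\<^sub>R u) \<bullet> l \<in> \<int>" using p1 l by (auto simp: primitive_in_def dual_lattice_def)
  then obtain p :: int where p: "t * (u \<bullet> l) = of_int p" by (metis Ints_cases inner_scaleR_left)
  have "(t' *\<^sub>R u) \<bullet> l \<in> \<int>" using p2 l by (auto simp: primitive_in_def dual_lattice_def)
  then obtain p' :: int where p': "t' * (u \<bullet> l) = of_int p'" by (metis Ints_cases inner_scaleR_left)
  define g where "g = gcd p p'"
  obtain x y where xy: "x * p + y * p' = g" unfolding g_def using bezout_int by metis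
  have p0: "p \<noteq> 0" using p t nz by (metis mult_eq_0_iff of_int_0 less_irrefl)
  have gpos: "g > 0" using p0 by (simp add: g_def)
  define w where "w = (of_int g / (u \<bullet> l)) *\<^sub>R u"
  have wD: "w \<in> dual_lattice L"
  proof -
    have "w = of_int x *\<^sub>R (t *\<^sub>R u) + of_int y *\<^sub>R (t' *\<^sub>R u)"
    proof -
      have "of_int g = of_int x * (t * (u \<bullet> l)) + of_int y * (t' * (u \<bullet> l))"
        using xy p p' by (metis of_int_add of_int_mult)
      then have "of_int g / (u \<bullet> l) = of_int x * t + of_int y * t'" using nz by (simp add: field_simps)
      then show ?thesis by (simp add: w_def scaleR_add_left)
    qed
    then show ?thesis using p1 p2
      by (metis dual_add dual_scale primitive_in_def)
  qed
  have key: "\<bar>q\<bar> = g" if pq: "s * (u \<bullet> l) = of_int q" and pr: "primitive_in (dual_lattice L) (s *\<^sub>R u)" and gq: "g dvd q" for s q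
  proof -
    from gq obtain r where r: "q = g * r" by (auto simp: dvd_def)
    have "s *\<^sub>R u = of_int r *\<^sub>R w"
      using nz gpos pq r by (simp add: w_def field_simps)
    then have "\<bar>r\<bar> = 1" using pr wD unfolding primitive_in_def by blast
    then show ?thesis using r gpos by (simp add: abs_mult)
  qed
  have "\<bar>p\<bar> = \<bar>p'\<bar>" using key[OF p p1] key[OF p' p2] by (simp add: g_def)
  moreover have "(p > 0) = (p' > 0)"
  proof -
    have "(real_of_int p > 0) = (u \<bullet> l > 0)" unfolding p[symmetric] using t(1) by (simp add: zero_less_mult_iff)
    moreover have "(real_of_int p' > 0) = (u \<bullet> l > 0)" unfolding p'[symmetric] using t(2) by (simp add: zero_less_mult_iff)
    ultimately show ?thesis by simp
  qed
  ultimately have "p = p'" by (metis abs_of_pos abs_of_nonneg not_less abs_of_nonpos minus_equation_iff abs_0_eq neg_0_le_iff_le) 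
  then show ?thesis using p p' nz by (metis mult_right_cancel)
qed


lemma facet_ineqs_finite:
  fixes R :: "'a::euclidean_space set"
  assumes poly: "polytope R" and full: "aff_dim R = int DIM('a)"
    and lat: "\<And>u. u \<noteq> 0 \<Longrightarrow> \<exists>l\<in>L. u \<bullet> l \<noteq> 0"
  shows "finite (facet_ineqs L R)"
proof -
  let ?f = "\<lambda>(a,b). {x\<in>R. a \<bullet> x = b}"
  have "?f ` facet_ineqs L R \<subseteq> {F. F face_of R}"
    by (auto simp: facet_ineqs_def is_facet_def)
  then have fin: "finite (?f ` facet_ineqs L R)"
    using finite_polytope_faces[OF poly] finite_subset by blast
  have "inj_on ?f (facet_ineqs L R)"
  proof (rule inj_onI, clarify)
    fix a b a' b'
    assume ab: "(a,b) \<in> facet_ineqs L R" and ab': "(a',b') \<in> facet_ineqs L R"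
      and eq: "{x\<in>R. a \<bullet> x = b} = {x\<in>R. a' \<bullet> x = b'}"
    have v1: "\<forall>x\<in>R. a \<bullet> x \<ge> b" and v2: "\<forall>x\<in>R. a' \<bullet> x \<ge> b'"
      and dim: "aff_dim {x\<in>R. a \<bullet> x = b} = aff_dim R - 1"
      and pa: "primitive_in (dual_lattice L) a" and pa': "primitive_in (dual_lattice L) a'"
      using ab ab' by (auto simp: facet_ineqs_def is_facet_def)
    obtain t where t: "t > 0" "a' = t *\<^sub>R a" "b' = t * b"
      using valid_facet_prop[OF full v1 v2 eq dim] by blast
    have an: "a \<noteq> 0" using pa by (simp add: primitive_in_def)
    obtain l where l: "l \<in> L" "a \<bullet> l \<noteq> 0" using lat[OF an] by blast
    have "1 = t"
      by (rule prim_unique[OF l, of 1 t]) (use pa pa' t in auto)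
    then show "a = a' \<and> b = b'" using t by simp
  qed
  then show ?thesis using fin finite_imageD by blast
qed


lemma int_lattice_dual: "(x::real^'n) \<in> int_lattice \<Longrightarrow> x \<in> dual_lattice int_lattice"
  unfolding dual_lattice_def int_lattice_def
  by (auto simp: inner_vec_def intro!: Ints_mult)

lemma int_lattice_axis: "axis k 1 \<in> (int_lattice :: (real^'n) set)"
  by (auto simp: int_lattice_def axis_def)

lemma int_lattice_nondeg: "(u::real^'n) \<noteq> 0 \<Longrightarrow> \<exists>l\<in>int_lattice. u \<bullet> l \<noteq> 0"
proof -
  assume "u \<noteq> 0"
  then obtain k where "u $ k \<noteq> 0" by (metis vec_eq_iff zero_index)
  then show ?thesis using int_lattice_axis[of k] by (intro bexI[of _ "axis k 1"]) (auto simp: inner_axis)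
qed

lemma rat_common_denom:
  fixes u :: "real^'n" assumes "\<And>i. u $ i \<in> \<rat>"
  obtains N :: nat where "N > 0" "N *\<^sub>R u \<in> int_lattice"
proof -
  have "\<forall>i. \<exists>n::nat. n > 0 \<and> real n * u $ i \<in> \<int>"
  proof
    fix i
    obtain r where r: "u $ i = of_rat r" using assms[of i] by (metis Rats_cases)
    obtain p q where pq: "quotient_of r = (p, q)" by (cases "quotient_of r")
    have q0: "q > 0" using quotient_of_denom_pos[OF pq] .
    have "r = of_int p / of_int q" using quotient_of_div[OF pq] .
    then have "real (nat q) * u $ i = of_int p" using q0 by (simp add: r of_rat_divide)
    then show "\<exists>n::nat. n > 0 \<and> real n * u $ i \<in> \<int>" using q0 by (intro exI[of _ "nat q"]) auto
  qed
  then obtain n where n: "\<And>i. n i > (0::nat)" "\<And>i. real (n i) * u $ i \<in> \<int>" by metis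
  define N where "N = (\<Prod>i\<in>UNIV. n i)"
  have "N > 0" using n(1) by (simp add: N_def)
  moreover have "N *\<^sub>R u \<in> int_lattice"
    unfolding int_lattice_def
  proof (clarify)
    fix i
    have "N = n i * (\<Prod>j\<in>UNIV - {i}. n j)" unfolding N_def by (simp add: prod.remove)
    then have "(N *\<^sub>R u) $ i = real (\<Prod>j\<in>UNIV - {i}. n j) * (real (n i) * u $ i)" by simp
    then show "(N *\<^sub>R u) $ i \<in> \<int>" using n(2)[of i] by (metis Ints_mult Ints_of_nat)
  qed
  ultimately show ?thesis using that by blast
qed


lemma rational_facet_normal:
  fixes P :: "(real^'n) set"
  assumes S: "finite S" "P = convex hull S" and rat: "\<And>v i. v \<in> S \<Longrightarrow> v $ i \<in> \<rat>"
    and full: "aff_dim P = int CARD('n)" and G: "G facet_of P"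
  shows "\<exists>a b. (a, b) \<in> facet_ineqs int_lattice P \<and> {x\<in>P. a \<bullet> x = b} = G"
proof -
  have "polytope P" using S unfolding polytope_def by blast
  then have poly: "polyhedron P" by (rule polytope_imp_polyhedron)
  obtain a0 b0 where a0: "a0 \<noteq> 0" "P \<subseteq> {x. a0 \<bullet> x \<le> b0}" "G = P \<inter> {x. a0 \<bullet> x = b0}"
    using facet_of_polyhedron[OF poly G] by blast
  obtain S' where S': "S' \<subseteq> S" "G = convex hull S'"
  proof -
    have "compact S" using S(1) by (rule finite_imp_compact)
    moreover have "G face_of convex hull S" using G S(2) facet_of_imp_face_of by blast
    ultimately show ?thesis using face_of_convex_hull_subset that by blast
  qed
  have Gne: "G \<noteq> {}" and Gdim: "aff_dim G = int CARD('n) - 1" and Gface: "G face_of P"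
    using G full by (auto simp: facet_of_def)
  have "S' \<noteq> {}" using Gne S'(2) by auto
  then obtain p0 where p0: "p0 \<in> S'" by blast
  define D where "D = (\<lambda>s. s - p0) ` S'"
  have S'G: "S' \<subseteq> G" unfolding S'(2) by (rule hull_subset)
  have Drat: "d $ i \<in> \<rat>" if dD: "d \<in> D" for d i
  proof -
    obtain s where s: "s \<in> S'" "d = s - p0" using dD unfolding D_def by blast
    have "s $ i \<in> \<rat>" "p0 $ i \<in> \<rat>" using rat S'(1) s(1) p0 by auto
    then show ?thesis using s(2) by simp
  qed
  have S'h: "\<And>s. s \<in> S' \<Longrightarrow> a0 \<bullet> s = b0" using S'G a0(3) by blast
  have Dorth: "\<And>d. d \<in> D \<Longrightarrow> a0 \<bullet> d = 0"
    using S'h p0 by (auto simp: D_def inner_diff_right)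
  obtain u where u: "u \<noteq> 0" "\<And>i. u $ i \<in> \<rat>" "\<And>d. d \<in> D \<Longrightarrow> u \<bullet> d = 0"
    using rational_orth[OF a0(1) Drat Dorth] by blast
  have "S' \<subseteq> {x. u \<bullet> x = u \<bullet> p0}"
  proof
    fix x assume "x \<in> S'"
    then have "x - p0 \<in> D" by (simp add: D_def)
    then have "u \<bullet> (x - p0) = 0" by (rule u(3))
    then show "x \<in> {x. u \<bullet> x = u \<bullet> p0}" by (simp add: inner_diff_right)
  qed
  then have Gu: "G \<subseteq> {x. u \<bullet> x = u \<bullet> p0}" unfolding S'(2) by (rule hull_minimal) (rule convex_hyperplane)
  have h1: "affine hull G = {x. u \<bullet> x = u \<bullet> p0}"
    by (rule affine_hull_eq_hyperplane[OF u(1) Gu]) (simp add: Gdim)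
  have h2: "affine hull G = {x. a0 \<bullet> x = b0}"
    by (rule affine_hull_eq_hyperplane[OF a0(1)]) (use a0(3) Gdim in auto)
  obtain t where t: "a0 = t *\<^sub>R u" "b0 = t * (u \<bullet> p0)"
    using hyperplane_eq_prop[OF u(1), of "u \<bullet> p0" a0 b0] h1 h2 by auto
  have t0: "t \<noteq> 0" using t a0(1) by auto
  obtain N :: nat where N: "N > 0" "N *\<^sub>R u \<in> int_lattice" using rat_common_denom[OF u(2)] by blast
  define w where "w = (if t > 0 then - (N *\<^sub>R u) else N *\<^sub>R u)"
  define c0 where "c0 = (if t > 0 then - (real N / t) else real N / t)"
  have c0: "c0 < 0"
  proof (cases "t > 0")
    case True then show ?thesis using N(1) by (simp add: c0_def)
  next
    case False then have "t < 0" using t0 by simp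
    then show ?thesis using N(1) by (simp add: c0_def divide_pos_neg)
  qed
  have wc: "w = c0 *\<^sub>R a0" using t0 by (simp add: w_def c0_def t)
  have wD: "w \<in> dual_lattice int_lattice" using int_lattice_dual[OF N(2)] dual_neg by (auto simp: w_def)
  have wnz: "w \<noteq> 0" using wc c0 a0(1) by auto
  obtain l where l: "l \<in> int_lattice" "w \<bullet> l \<noteq> 0" using int_lattice_nondeg[OF wnz] by blast
  obtain c where c: "c > 0" "primitive_in (dual_lattice int_lattice) (c *\<^sub>R w)"
    using prim_exists[OF wD l] by blast
  define lam where "lam = c * c0"
  have laml: "lam < 0" using c c0 by (simp add: lam_def mult_pos_neg)
  have prim: "primitive_in (dual_lattice int_lattice) (lam *\<^sub>R a0)" using c(2) by (simp add: wc lam_def)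
  have valid: "\<forall>x\<in>P. (lam *\<^sub>R a0) \<bullet> x \<ge> lam * b0"
  proof
    fix x assume "x \<in> P"
    then have "a0 \<bullet> x \<le> b0" using a0(2) by blast
    then show "(lam *\<^sub>R a0) \<bullet> x \<ge> lam * b0" using laml by (simp add: mult_le_cancel_left_neg)
  qed
  have Geq: "{x\<in>P. (lam *\<^sub>R a0) \<bullet> x = lam * b0} = G" using a0(3) laml by force
  have "(lam *\<^sub>R a0, lam * b0) \<in> facet_ineqs int_lattice P"
    unfolding facet_ineqs_def is_facet_def mem_Collect_eq prod.case Geq using prim valid Gface Gdim full by simp
  then show ?thesis using Geq by blast
qed


lemma ld_ge_iff:
  assumes "finite F" "F \<noteq> {}"
  shows "(s \<le> Min ((\<lambda>(a, b). a \<bullet> x - b) ` F)) \<longleftrightarrow> (\<forall>(a,b)\<in>F. s \<le> a \<bullet> x - b)"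
  using assms by (auto simp: Min_ge_iff)

lemma P_rep:
  fixes P :: "(real^'n) set"
  assumes S: "finite S" "P = convex hull S" and rat: "\<And>v i. v \<in> S \<Longrightarrow> v $ i \<in> \<rat>"
    and full: "aff_dim P = int CARD('n)"
  shows "P = {x. \<forall>(a,b)\<in>facet_ineqs int_lattice P. a \<bullet> x \<ge> b}"
proof
  show "P \<subseteq> {x. \<forall>(a,b)\<in>facet_ineqs int_lattice P. a \<bullet> x \<ge> b}"
    by (auto simp: facet_ineqs_def)
next
  have "polytope P" using S unfolding polytope_def by blast
  then have poly: "polyhedron P" by (rule polytope_imp_polyhedron)
  obtain F where F: "finite F" and seq: "P = affine hull P \<inter> \<Inter>F"
    and faces: "\<And>h. h \<in> F \<Longrightarrow> \<exists>a b. a \<noteq> 0 \<and> h = {x. a \<bullet> x \<le> b}"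
    and min: "\<And>F'. F' \<subset> F \<Longrightarrow> P \<subset> (affine hull P) \<inter> \<Inter>F'"
    using poly by (simp add: polyhedron_Int_affine_minimal) meson
  then obtain a b where ab: "\<And>h. h \<in> F \<Longrightarrow> a h \<noteq> 0 \<and> h = {x. a h \<bullet> x \<le> b h}"
    by metis
  have affU: "affine hull P = UNIV" using full aff_dim_eq_full[of P] by simp
  show "{x. \<forall>(a,b)\<in>facet_ineqs int_lattice P. a \<bullet> x \<ge> b} \<subseteq> P"
  proof
    fix x assume x: "x \<in> {x. \<forall>(a,b)\<in>facet_ineqs int_lattice P. a \<bullet> x \<ge> b}"
    show "x \<in> P"
    proof (rule ccontr)
      assume "x \<notin> P"
      then obtain h where h: "h \<in> F" "x \<notin> h" using seq affU by auto
      have hx: "a h \<bullet> x > b h" using h ab by force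
      have fac: "(P \<inter> {x. a h \<bullet> x = b h}) facet_of P"
        using facet_of_polyhedron_explicit[OF F seq ab min] h(1) by blast
      obtain a' b' where ab': "(a', b') \<in> facet_ineqs int_lattice P" "{x\<in>P. a' \<bullet> x = b'} = P \<inter> {x. a h \<bullet> x = b h}"
        using rational_facet_normal[OF S rat full fac] by blast
      have v1: "\<forall>y\<in>P. (- a h) \<bullet> y \<ge> - b h"
        using seq h(1) ab by fastforce
      have v2: "\<forall>y\<in>P. a' \<bullet> y \<ge> b'" using ab'(1) by (auto simp: facet_ineqs_def)
      have eq: "{y\<in>P. (- a h) \<bullet> y = - b h} = {y\<in>P. a' \<bullet> y = b'}" using ab'(2) by auto
      have dim: "aff_dim {y\<in>P. (- a h) \<bullet> y = - b h} = aff_dim P - 1"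
        using fac by (simp add: facet_of_def Int_def conj_commute)
      obtain t where t: "t > 0" "a' = t *\<^sub>R (- a h)" "b' = t * (- b h)"
        using valid_facet_prop[OF _ v1 v2 eq dim] full by auto
      have "a' \<bullet> x < b'" using t hx by (simp add: mult_less_cancel_left_pos)
      moreover have "a' \<bullet> x \<ge> b'" using x ab'(1) by auto
      ultimately show False by simp
    qed
  qed
qed


lemma sup_attained:
  fixes K :: "'a::euclidean_space set" and FI :: "('a \<times> real) set"
  assumes K: "compact K"
    and A: "A = {s. s > 0 \<and> (\<exists>x. \<forall>(a,b)\<in>FI. s \<le> a \<bullet> x - b)}"
    and Ane: "A \<noteq> {}" and bdd: "bdd_above A"
    and wit: "\<And>s x. s \<in> A \<Longrightarrow> \<forall>(a,b)\<in>FI. s \<le> a \<bullet> x - b \<Longrightarrow> x \<in> K"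
  shows "\<exists>x\<in>K. \<forall>(a,b)\<in>FI. Sup A \<le> a \<bullet> x - b"
proof -
  define f where "f s = {x. \<forall>(a,b)\<in>FI. s \<le> a \<bullet> x - b}" for s
  have cl: "closed (f s)" for s
  proof -
    have "f s = (\<Inter>p\<in>FI. {x. fst p \<bullet> x \<ge> snd p + s})" by (force simp: f_def)
    then show ?thesis by (auto intro!: closed_INT closed_halfspace_ge)
  qed
  have "K \<inter> (\<Inter>s\<in>A. f s) \<noteq> {}"
  proof (rule compact_imp_fip_image[OF K cl])
    fix I' assume I': "finite I'" "I' \<subseteq> A"
    show "K \<inter> (\<Inter>s\<in>I'. f s) \<noteq> {}"
    proof (cases "I' = {}")
      case True
      obtain s where "s \<in> A" using Ane by auto
      then obtain x where "\<forall>(a,b)\<in>FI. s \<le> a \<bullet> x - b" using A by auto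
      with wit \<open>s \<in> A\<close> have "x \<in> K" by blast
      then show ?thesis using True by auto
    next
      case False
      define m where "m = Max I'"
      have mA: "m \<in> A" using False I' Max_in by (auto simp: m_def)
      then obtain x where x: "\<forall>(a,b)\<in>FI. m \<le> a \<bullet> x - b" using A by auto
      with wit mA have "x \<in> K" by blast
      moreover have "x \<in> f s" if "s \<in> I'" for s
      proof -
        have "s \<le> m" using that I'(1) by (simp add: m_def)
        then show ?thesis using x by (fastforce simp: f_def)
      qed
      ultimately show ?thesis by blast
    qed
  qed
  then obtain x where x: "x \<in> K" "\<And>s. s \<in> A \<Longrightarrow> x \<in> f s" by blast
  have "Sup A \<le> a \<bullet> x - b" if "(a,b) \<in> FI" for a b
    by (rule cSup_least[OF Ane]) (use x(2) that in \<open>fastforce simp: f_def\<close>)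
  then show ?thesis using x(1) by blast
qed

lemma int_pos:
  fixes R :: "'a::euclidean_space set"
  assumes ab: "(a,b) \<in> facet_ineqs L R" and y: "y \<in> interior R"
  shows "a \<bullet> y > b"
proof -
  have yR: "y \<in> R" using y interior_subset by blast
  then have ge: "a \<bullet> y \<ge> b" using ab by (auto simp: facet_ineqs_def)
  have G: "{x\<in>R. a \<bullet> x = b} face_of R" and dim: "aff_dim {x\<in>R. a \<bullet> x = b} = aff_dim R - 1"
    using ab by (auto simp: facet_ineqs_def is_facet_def)
  show ?thesis
  proof (rule ccontr)
    assume "\<not> a \<bullet> y > b"
    with ge have "a \<bullet> y = b" by simp
    with yR y have "y \<in> {x\<in>R. a \<bullet> x = b} \<inter> interior R" by auto
    then have "{x\<in>R. a \<bullet> x = b} = R" using face_of_disjoint_interior[OF G] by blast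
    with dim show False by simp
  qed
qed

lemma full_interior_ne:
  fixes R :: "'a::euclidean_space set"
  assumes "convex R" "aff_dim R = int DIM('a)"
  shows "interior R \<noteq> {}"
proof -
  have aff: "affine hull R = UNIV" using assms(2) aff_dim_eq_full by blast
  have "R \<noteq> {}"
  proof
    assume "R = {}" then have "aff_dim R = -1" by simp
    with assms(2) show False by linarith
  qed
  then show ?thesis using rel_interior_eq_empty[OF assms(1)] rel_interior_interior[OF aff] by simp
qed


locale pset =
  fixes P :: "(real^'n) set" and S :: "(real^'n) set"
  assumes S: "finite S" "P = convex hull S" and rat: "\<And>v i. v \<in> S \<Longrightarrow> v $ i \<in> \<rat>"
    and full: "aff_dim P = int CARD('n)"
begin

definition "FP = facet_ineqs int_lattice P"
definition "AP = {s. s > 0 \<and> shrink int_lattice P s \<noteq> {}}"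
definition "sstar = Sup AP"

lemma polyP: "polytope P" using S unfolding polytope_def by blast
lemma convP: "convex P" using S by simp
lemma compP: "compact P" using S by (simp add: compact_convex_hull finite_imp_compact)

lemma FP_fin: "finite FP"
  unfolding FP_def by (rule facet_ineqs_finite[OF polyP]) (use full int_lattice_nondeg in auto)

lemma FP_ne: "FP \<noteq> {}"
proof -
  have "0 < aff_dim P" using full by simp
  then obtain G where "G facet_of P" using polytope_facet_exists[OF polyP] by blast
  then show ?thesis using rational_facet_normal[OF S rat full] by (auto simp: FP_def)
qed

lemma ld_P: "lattice_dist int_lattice P x = Min ((\<lambda>(a, b). a \<bullet> x - b) ` FP)"
  by (simp add: lattice_dist_def FP_def)

lemma shrink_P: "shrink int_lattice P s = {x. \<forall>(a,b)\<in>FP. s \<le> a \<bullet> x - b}"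
  unfolding shrink_def ld_P using ld_ge_iff[OF FP_fin FP_ne] by auto

lemma Prep: "P = {x. \<forall>(a,b)\<in>FP. a \<bullet> x \<ge> b}"
  unfolding FP_def by (rule P_rep[OF S rat full])

lemma in_P: "s > 0 \<Longrightarrow> \<forall>(a,b)\<in>FP. s \<le> a \<bullet> x - b \<Longrightarrow> x \<in> P"
  by (subst Prep) fastforce

lemma AP_eq: "AP = {s. s > 0 \<and> (\<exists>x. \<forall>(a,b)\<in>FP. s \<le> a \<bullet> x - b)}"
  unfolding AP_def shrink_P by auto

lemma AP_bdd: "bdd_above AP"
proof -
  obtain a0 b0 where ab0: "(a0, b0) \<in> FP" using FP_ne by auto
  obtain B where B: "\<And>x. x \<in> P \<Longrightarrow> norm x \<le> B" using compP compact_imp_bounded bounded_iff by metis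
  show ?thesis
  proof (rule bdd_aboveI)
    fix s assume "s \<in> AP"
    then obtain x where s: "s > 0" "\<forall>(a,b)\<in>FP. s \<le> a \<bullet> x - b" by (auto simp: AP_eq)
    then have xP: "x \<in> P" by (rule in_P)
    have "s \<le> a0 \<bullet> x - b0" using s ab0 by auto
    also have "a0 \<bullet> x \<le> norm a0 * norm x" by (rule norm_cauchy_schwarz)
    also have "norm a0 * norm x \<le> norm a0 * B" using B[OF xP] by (simp add: mult_left_mono)
    finally show "s \<le> norm a0 * B - b0" by simp
  qed
qed

lemma AP_witness: "\<exists>d>0. d \<in> AP"
proof -
  obtain y where y: "y \<in> interior P" using full_interior_ne[OF convP] full by auto
  let ?V = "(\<lambda>(a, b). a \<bullet> y - b) ` FP"
  define d where "d = Min ?V"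
  have pos: "\<forall>v\<in>?V. v > 0" using int_pos[OF _ y] by (auto simp: FP_def)
  have "d > 0" unfolding d_def using FP_fin FP_ne pos by (simp add: Min_gr_iff)
  moreover have "\<forall>(a,b)\<in>FP. d \<le> a \<bullet> y - b"
  proof (clarify)
    fix a b assume "(a,b) \<in> FP"
    then have "a \<bullet> y - b \<in> ?V" by force
    then show "d \<le> a \<bullet> y - b" unfolding d_def using FP_fin by simp
  qed
  ultimately show ?thesis by (auto simp: AP_eq)
qed

lemma AP_ne: "AP \<noteq> {}" using AP_witness by auto

lemma AP_le: "s \<in> AP \<Longrightarrow> s \<le> sstar"
  unfolding sstar_def by (rule cSup_upper[OF _ AP_bdd])

lemma sstar_pos: "sstar > 0"
  using AP_witness AP_le by force

lemma attained: "\<exists>c\<in>P. \<forall>(a,b)\<in>FP. sstar \<le> a \<bullet> c - b"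
  unfolding sstar_def
  by (rule sup_attained[OF compP AP_eq AP_ne AP_bdd]) (auto simp: AP_eq intro: in_P)

lemma qcd_P: "qcodegree int_lattice P = inverse sstar"
  by (simp add: qcodegree_def AP_def sstar_def)

definition "C = core int_lattice P"

lemma C_eq: "C = {x. \<forall>(a,b)\<in>FP. sstar \<le> a \<bullet> x - b}"
  unfolding C_def core_def qcd_P using sstar_pos by (simp add: shrink_P divide_inverse)

lemma C_ne: "C \<noteq> {}" using attained C_eq by auto

lemma C_convex: "convex C"
proof -
  have "C = (\<Inter>p\<in>FP. {x. fst p \<bullet> x \<ge> snd p + sstar})" unfolding C_eq by force
  then show ?thesis by (auto intro!: convex_INT convex_halfspace_ge)
qed

definition "c = (SOME c. c \<in> rel_interior C)"

lemma c_ri: "c \<in> rel_interior C"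
  unfolding c_def by (rule someI_ex) (use C_ne C_convex rel_interior_eq_empty in blast)

lemma c_C: "c \<in> C" using c_ri rel_interior_subset by blast

definition "I = {p\<in>FP. fst p \<bullet> c - snd p = sstar}"

end


context pset begin

lemma I_sub: "I \<subseteq> FP" by (auto simp: I_def)

lemma F1C: assumes ab: "(a,b) \<in> I" and x: "x \<in> C" shows "a \<bullet> x - b = sstar"
proof -
  have abF: "(a,b) \<in> FP" and ac: "a \<bullet> c - b = sstar" using ab by (auto simp: I_def)
  have ge: "sstar \<le> a \<bullet> x - b" using x abF by (auto simp: C_eq)
  obtain e where e: "e > 0" "cball c e \<inter> affine hull C \<subseteq> C"
    using c_ri mem_rel_interior_cball by blast
  have "a \<bullet> x - b \<le> sstar"
  proof (cases "x = c")
    case True then show ?thesis using ac by simp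
  next
    case False
    define t where "t = e / norm (x - c)"
    have t: "t > 0" using e False by (simp add: t_def)
    define z where "z = (1 + t) *\<^sub>R c + (- t) *\<^sub>R x"
    have "z \<in> affine hull C"
      unfolding z_def by (rule mem_affine) (use c_C x in \<open>auto intro: hull_inc\<close>)
    moreover have "z \<in> cball c e"
    proof -
      have "c - z = t *\<^sub>R (x - c)" by (simp add: z_def algebra_simps)
      then have "dist c z = t * norm (x - c)" using t by (simp add: dist_norm)
      also have "\<dots> = e" using False by (simp add: t_def)
      finally show ?thesis by simp
    qed
    ultimately have "z \<in> C" using e by blast
    then have "sstar \<le> a \<bullet> z - b" using abF by (auto simp: C_eq)
    also have "a \<bullet> z - b = (1 + t) * (a \<bullet> c - b) - t * (a \<bullet> x - b)"
      by (simp add: z_def inner_add_right algebra_simps)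
    finally have "t * (a \<bullet> x - b) \<le> t * sstar" using ac by (simp add: algebra_simps)
    then show ?thesis using t by simp
  qed
  with ge show ?thesis by simp
qed

lemma F1: assumes ab: "(a,b) \<in> I" and x: "x \<in> affine hull C" shows "a \<bullet> x = b + sstar"
proof -
  have "C \<subseteq> {x. a \<bullet> x = b + sstar}" using F1C[OF ab] by force
  then have "affine hull C \<subseteq> {x. a \<bullet> x = b + sstar}" by (rule hull_minimal) (rule affine_hyperplane)
  then show ?thesis using x by blast
qed

lemma F1dir: assumes ab: "(a,b) \<in> I" and k: "k \<in> core_dir P" shows "a \<bullet> k = 0"
proof -
  obtain x y where "k = x - y" "x \<in> affine hull C" "y \<in> affine hull C"
    using k by (auto simp: core_dir_def C_def)
  then show ?thesis using F1[OF ab] by (simp add: inner_diff_right)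
qed

lemma perturb:
  obtains \<epsilon> where "0 < \<epsilon>" "\<epsilon> \<le> 1"
    "\<And>a b. (a,b) \<in> FP - I \<Longrightarrow> a \<bullet> (c + \<epsilon> *\<^sub>R (x - c)) - b > sstar"
proof -
  define U where "U = (\<Inter>p\<in>FP - I. {z. fst p \<bullet> z > snd p + sstar})"
  have "open U" unfolding U_def using FP_fin by (auto intro!: open_INT open_halfspace_gt)
  moreover have "c \<in> U"
  proof -
    have "fst p \<bullet> c > snd p + sstar" if "p \<in> FP - I" for p
    proof -
      have "sstar \<le> fst p \<bullet> c - snd p" using c_C that by (auto simp: C_eq)
      moreover have "fst p \<bullet> c - snd p \<noteq> sstar" using that by (auto simp: I_def)
      ultimately show ?thesis by simp
    qed
    then show ?thesis by (auto simp: U_def)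
  qed
  ultimately obtain e where e: "e > 0" "ball c e \<subseteq> U" using open_contains_ball by blast
  define \<epsilon> where "\<epsilon> = min 1 (e / (2 * (norm (x - c) + 1)))"
  have aux: "\<And>t::real. 0 \<le> t \<Longrightarrow> 0 < 2 * (t + 1)" by (intro mult_pos_pos) auto
  have den: "0 < 2 * (norm (x - c) + 1)" by (rule aux) simp
  then have "0 < e / (2 * (norm (x - c) + 1))" using e(1) by (rule divide_pos_pos[rotated])
  then have \<epsilon>: "0 < \<epsilon>" "\<epsilon> \<le> 1" by (auto simp: \<epsilon>_def)
  have "c + \<epsilon> *\<^sub>R (x - c) \<in> ball c e"
  proof -
    have "dist c (c + \<epsilon> *\<^sub>R (x - c)) = \<epsilon> * norm (x - c)" using \<epsilon> by (simp add: dist_norm)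
    also have "\<dots> \<le> (e / (2 * (norm (x - c) + 1))) * norm (x - c)"
      by (rule mult_right_mono) (auto simp: \<epsilon>_def)
    also have "\<dots> < e"
    proof -
      have aux2: "\<And>t::real. 0 \<le> t \<Longrightarrow> t < 2 * (t + 1)" by (simp add: algebra_simps)
      have "norm (x - c) < 2 * (norm (x - c) + 1)" by (rule aux2) simp
      then have "norm (x - c) / (2 * (norm (x - c) + 1)) < 1" using den by (simp only: divide_less_eq_1_pos)
      then have "e * (norm (x - c) / (2 * (norm (x - c) + 1))) < e * 1" using e(1) by (rule mult_strict_left_mono)
      then show ?thesis by simp
    qed
    finally show ?thesis by simp
  qed
  then have "c + \<epsilon> *\<^sub>R (x - c) \<in> U" using e by blast
  then have "\<And>a b. (a,b) \<in> FP - I \<Longrightarrow> a \<bullet> (c + \<epsilon> *\<^sub>R (x - c)) - b > sstar"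
    unfolding U_def by force
  with \<epsilon> that show ?thesis by blast
qed

lemma I_comb: assumes ab: "(a,b) \<in> I"
  shows "a \<bullet> (c + \<epsilon> *\<^sub>R (x - c)) - b = (1 - \<epsilon>) * sstar + \<epsilon> * (a \<bullet> x - b)"
proof -
  have "a \<bullet> c - b = sstar" using ab by (auto simp: I_def)
  then show ?thesis by (simp add: inner_add_right inner_diff_right algebra_simps)
qed

lemma F2a: assumes h: "\<forall>(a,b)\<in>I. s \<le> a \<bullet> x - b" shows "s \<le> sstar"
proof (rule ccontr)
  assume "\<not> s \<le> sstar"
  then have ss: "s > sstar" by simp
  obtain \<epsilon> where \<epsilon>: "0 < \<epsilon>" "\<epsilon> \<le> 1"
    and nonI: "\<And>a b. (a,b) \<in> FP - I \<Longrightarrow> a \<bullet> (c + \<epsilon> *\<^sub>R (x - c)) - b > sstar"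
    using perturb by blast
  define z where "z = c + \<epsilon> *\<^sub>R (x - c)"
  have all: "a \<bullet> z - b > sstar" if "(a,b) \<in> FP" for a b
  proof (cases "(a,b) \<in> I")
    case True
    have "sstar < (1 - \<epsilon>) * sstar + \<epsilon> * s" using \<epsilon> ss by (simp add: algebra_simps)
    also have "\<dots> \<le> (1 - \<epsilon>) * sstar + \<epsilon> * (a \<bullet> x - b)"
      using h True \<epsilon> by (auto intro: mult_left_mono)
    finally show ?thesis using I_comb[OF True] by (simp add: z_def)
  next
    case False then show ?thesis using nonI that by (simp add: z_def)
  qed
  let ?V = "(\<lambda>(a, b). a \<bullet> z - b) ` FP"
  define d where "d = Min ?V"
  have "d > sstar" unfolding d_def using FP_fin FP_ne all by (auto simp: Min_gr_iff)
  moreover have "\<forall>(a,b)\<in>FP. d \<le> a \<bullet> z - b"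
  proof (clarify)
    fix a b assume "(a,b) \<in> FP"
    then have "a \<bullet> z - b \<in> ?V" by force
    then show "d \<le> a \<bullet> z - b" unfolding d_def using FP_fin by simp
  qed
  ultimately have "d \<in> AP" using sstar_pos by (auto simp: AP_eq)
  then have "d \<le> sstar" by (rule AP_le)
  with \<open>d > sstar\<close> show False by simp
qed

lemma F2b: assumes h: "\<forall>(a,b)\<in>I. sstar \<le> a \<bullet> x - b" shows "x \<in> affine hull C"
proof -
  obtain \<epsilon> where \<epsilon>: "0 < \<epsilon>" "\<epsilon> \<le> 1"
    and nonI: "\<And>a b. (a,b) \<in> FP - I \<Longrightarrow> a \<bullet> (c + \<epsilon> *\<^sub>R (x - c)) - b > sstar"
    using perturb by blast
  define z where "z = c + \<epsilon> *\<^sub>R (x - c)"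
  have "sstar \<le> a \<bullet> z - b" if "(a,b) \<in> FP" for a b
  proof (cases "(a,b) \<in> I")
    case True
    have "sstar = (1 - \<epsilon>) * sstar + \<epsilon> * sstar" by (simp add: algebra_simps)
    also have "\<dots> \<le> (1 - \<epsilon>) * sstar + \<epsilon> * (a \<bullet> x - b)"
      using h True \<epsilon> by (auto intro: mult_left_mono)
    finally show ?thesis using I_comb[OF True] by (simp add: z_def)
  next
    case False then have "sstar < a \<bullet> z - b" using nonI that by (simp add: z_def)
    then show ?thesis by simp
  qed
  then have zC: "z \<in> C" by (auto simp: C_eq)
  have "x = (1 - 1/\<epsilon>) *\<^sub>R c + (1/\<epsilon>) *\<^sub>R z"
    using \<epsilon> by (simp add: z_def algebra_simps)
  also have "\<dots> \<in> affine hull C"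
    by (rule mem_affine) (use c_C zC in \<open>auto intro: hull_inc\<close>)
  finally show ?thesis .
qed

lemma I_ne: "I \<noteq> {}"
proof
  assume "I = {}"
  then have "sstar + 1 \<le> sstar" using F2a[of "sstar + 1" c] by simp
  then show False by simp
qed

end


locale qset = pset P S for P :: "(real^'n) set" and S +
  fixes \<pi> :: "real^'n \<Rightarrow> 'm::euclidean_space"
  assumes lin: "linear \<pi>" and sur: "surj \<pi>" and ker: "{x. \<pi> x = 0} = core_dir P"
begin

definition "g = (SOME g. linear g \<and> \<pi> \<circ> g = id)"

lemma g_props: "linear g" "\<And>y. \<pi> (g y) = y"
proof -
  have "\<exists>g. linear g \<and> \<pi> \<circ> g = id" by (rule linear_surjective_right_inverse[OF lin sur])
  then have "linear g \<and> \<pi> \<circ> g = id" unfolding g_def by (rule someI_ex)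
  then show "linear g" "\<And>y. \<pi> (g y) = y" by (auto simp: fun_eq_iff)
qed

lemma ker_dir: "\<pi> x = \<pi> x' \<Longrightarrow> x - x' \<in> core_dir P"
proof -
  assume "\<pi> x = \<pi> x'"
  then have "\<pi> (x - x') = 0" using lin by (simp add: linear_diff)
  then show ?thesis using ker by blast
qed

lemma dir_ker: "k \<in> core_dir P \<Longrightarrow> \<pi> k = 0" using ker by blast

lemma aff_diff: "x \<in> affine hull C \<Longrightarrow> y \<in> affine hull C \<Longrightarrow> \<pi> x = \<pi> y"
proof -
  assume "x \<in> affine hull C" "y \<in> affine hull C"
  then have "x - y \<in> core_dir P" by (auto simp: core_dir_def C_def)
  then have "\<pi> (x - y) = 0" by (rule dir_ker)
  then show ?thesis using lin by (simp add: linear_diff)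
qed

definition "ad a = adjoint g a"

lemma key: assumes ab: "(a,b) \<in> I" shows "ad a \<bullet> \<pi> x = a \<bullet> x"
proof -
  have "ad a \<bullet> \<pi> x = \<pi> x \<bullet> adjoint g a" by (simp add: ad_def inner_commute)
  also have "\<dots> = g (\<pi> x) \<bullet> a" by (rule adjoint_works[OF g_props(1)])
  also have "g (\<pi> x) - x \<in> core_dir P" by (rule ker_dir) (simp add: g_props)
  then have "a \<bullet> (g (\<pi> x) - x) = 0" by (rule F1dir[OF ab])
  then have "g (\<pi> x) \<bullet> a = a \<bullet> x" by (simp add: inner_diff_right inner_commute)
  finally show ?thesis .
qed

definition "M = \<pi> ` int_lattice"
definition "Q = \<pi> ` P"
definition "FQ = facet_ineqs M Q"

lemma Q_hull: "Q = convex hull (\<pi> ` S)"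
proof -
  have "Q = \<pi> ` P" by (rule Q_def)
  also have "\<dots> = \<pi> ` (convex hull S)" by (simp only: S(2))
  also have "\<dots> = convex hull (\<pi> ` S)" by (rule convex_hull_linear_image[OF lin])
  finally show ?thesis .
qed

lemma polyQ: "polytope Q" using Q_hull S(1) unfolding polytope_def by blast
lemma convQ: "convex Q" by (simp add: Q_hull)
lemma compQ: "compact Q" using Q_hull S(1) by (simp add: compact_convex_hull finite_imp_compact)

lemma affQ: "affine hull Q = UNIV"
proof -
  have bl: "bounded_linear \<pi>" using lin linear_conv_bounded_linear by blast
  have "affine hull P = UNIV" using full aff_dim_eq_full[of P] by simp
  then have "affine hull Q = \<pi> ` UNIV" unfolding Q_def affine_hull_linear_image[OF bl, symmetric] by simp
  then show ?thesis using sur by simp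
qed

lemma fullQ: "aff_dim Q = int DIM('m)"
  using affQ aff_dim_eq_full by blast

lemma M_nondeg: "u \<noteq> 0 \<Longrightarrow> \<exists>l\<in>M. u \<bullet> l \<noteq> 0"
proof (rule ccontr)
  assume u: "u \<noteq> 0" and "\<not> (\<exists>l\<in>M. u \<bullet> l \<noteq> 0)"
  then have z: "\<And>k. u \<bullet> \<pi> (axis k 1) = 0" using int_lattice_axis by (auto simp: M_def)
  have "u \<bullet> \<pi> x = 0" for x
  proof -
    have "\<pi> x = \<pi> (\<Sum>i\<in>UNIV. x $ i *\<^sub>R axis i 1)" by (simp add: basis_expansion[of x, unfolded scalar_mult_eq_scaleR])
    also have "\<dots> = (\<Sum>i\<in>UNIV. x $ i *\<^sub>R \<pi> (axis i 1))" using lin by (simp add: linear_sum linear_scale)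
    finally show ?thesis using z by (simp add: inner_sum_right)
  qed
  then have "u \<bullet> u = 0" using sur by (metis surjD)
  with u show False by simp
qed

lemma FQ_fin: "finite FQ"
  unfolding FQ_def by (rule facet_ineqs_finite[OF polyQ fullQ M_nondeg])

lemma ad_FQ: assumes ab: "(a,b) \<in> I" shows "(ad a, b) \<in> FQ"
proof -
  have abP: "(a,b) \<in> FP" using ab I_sub by blast
  then have pa: "primitive_in (dual_lattice int_lattice) a" and va: "\<forall>x\<in>P. a \<bullet> x \<ge> b"
    and fa: "is_facet {x\<in>P. a \<bullet> x = b} P"
    by (auto simp: FP_def facet_ineqs_def)
  have an: "a \<noteq> 0" using pa by (simp add: primitive_in_def)
  have adn: "ad a \<noteq> 0"
  proof
    assume "ad a = 0"
    then have "a \<bullet> a = 0" using key[OF ab, of a] by simp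
    with an show False by simp
  qed
  have prim: "primitive_in (dual_lattice M) (ad a)"
    unfolding primitive_in_def
  proof (intro conjI ballI allI impI)
    have aD: "a \<in> dual_lattice int_lattice" using pa by (simp add: primitive_in_def)
    show "ad a \<in> dual_lattice M"
      unfolding dual_lattice_def M_def
    proof (clarify)
      fix x :: "real^'n" assume "x \<in> int_lattice"
      then have "a \<bullet> x \<in> \<int>" using aD by (simp add: dual_lattice_def)
      then show "ad a \<bullet> \<pi> x \<in> \<int>" by (simp add: key[OF ab])
    qed
    show "ad a \<noteq> 0" by (rule adn)
    fix b' k assume b': "b' \<in> dual_lattice M" and k: "ad a = of_int (k::int) *\<^sub>R b'"
    define bb where "bb = adjoint \<pi> b'"
    have bbx: "bb \<bullet> x = b' \<bullet> \<pi> x" for x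
      using adjoint_works[OF lin, of x b'] by (simp add: bb_def inner_commute)
    have bbD: "bb \<in> dual_lattice int_lattice"
      unfolding dual_lattice_def
    proof (clarify)
      fix x :: "real^'n" assume "x \<in> int_lattice"
      then have "\<pi> x \<in> M" by (simp add: M_def)
      then have "b' \<bullet> \<pi> x \<in> \<int>" using b' by (simp add: dual_lattice_def)
      then show "bb \<bullet> x \<in> \<int>" by (simp add: bbx)
    qed
    have "(a - of_int k *\<^sub>R bb) \<bullet> x = 0" for x
      using key[OF ab, of x] k bbx[of x] by (simp add: inner_diff_left)
    from this[of "a - of_int k *\<^sub>R bb"] have "a = of_int k *\<^sub>R bb" by simp
    then show "\<bar>k\<bar> = 1" using pa bbD unfolding primitive_in_def by blast
  qed
  have valid: "\<forall>y\<in>Q. ad a \<bullet> y \<ge> b"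
  proof
    fix y assume "y \<in> Q"
    then obtain x where "x \<in> P" "y = \<pi> x" by (auto simp: Q_def)
    then show "ad a \<bullet> y \<ge> b" using va key[OF ab, of x] by simp
  qed
  define G' where "G' = {y\<in>Q. ad a \<bullet> y = b}"
  have face: "G' face_of Q"
  proof -
    have "(Q \<inter> {y. ad a \<bullet> y = b}) face_of Q"
      by (rule face_of_Int_supporting_hyperplane_ge[OF convQ]) (use valid in auto)
    moreover have "Q \<inter> {y. ad a \<bullet> y = b} = G'" by (auto simp: G'_def)
    ultimately show ?thesis by simp
  qed
  define G where "G = {x\<in>P. a \<bullet> x = b}"
  have G'G: "G' = \<pi> ` G"
  proof
    show "G' \<subseteq> \<pi> ` G"
    proof
      fix y assume "y \<in> G'"
      then obtain x where x: "x \<in> P" "y = \<pi> x" "ad a \<bullet> y = b" unfolding G'_def Q_def by blast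
      then have "a \<bullet> x = b" using key[OF ab, of x] by simp
      then show "y \<in> \<pi> ` G" using x unfolding G_def by blast
    qed
    show "\<pi> ` G \<subseteq> G'"
    proof
      fix y assume "y \<in> \<pi> ` G"
      then obtain x where x: "x \<in> P" "y = \<pi> x" "a \<bullet> x = b" unfolding G_def by blast
      then have "ad a \<bullet> y = b" using key[OF ab, of x] by simp
      then show "y \<in> G'" using x unfolding G'_def Q_def by blast
    qed
  qed
  have Gdim: "aff_dim G = int CARD('n) - 1" using fa full unfolding is_facet_def G_def by simp
  have hG: "affine hull G = {x. a \<bullet> x = b}"
    by (rule affine_hull_eq_hyperplane[OF an]) (use Gdim in \<open>auto simp: G_def\<close>)
  have bl: "bounded_linear \<pi>" using lin linear_conv_bounded_linear by blast
  have "affine hull G' = \<pi> ` {x. a \<bullet> x = b}"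
    unfolding G'G affine_hull_linear_image[OF bl, symmetric] hG ..
  also have "\<dots> = {y. ad a \<bullet> y = b}"
  proof
    show "\<pi> ` {x. a \<bullet> x = b} \<subseteq> {y. ad a \<bullet> y = b}" using key[OF ab] by auto
    show "{y. ad a \<bullet> y = b} \<subseteq> \<pi> ` {x. a \<bullet> x = b}"
    proof
      fix y assume y: "y \<in> {y. ad a \<bullet> y = b}"
      have "\<pi> (g y) = y" by (rule g_props)
      moreover have "a \<bullet> g y = b" using y key[OF ab, of "g y"] g_props(2)[of y] by simp
      ultimately show "y \<in> \<pi> ` {x. a \<bullet> x = b}" by (metis (mono_tags, lifting) image_eqI mem_Collect_eq)
    qed
  qed
  finally have hG': "affine hull G' = {y. ad a \<bullet> y = b}" .
  have "aff_dim G' = aff_dim (affine hull G')" by simp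
  also have "\<dots> = int DIM('m) - 1" unfolding hG' using aff_dim_hyperplane[OF adn, of b] DIM_positive[where 'a='m] by (simp add: of_nat_diff)
  finally have "aff_dim G' = int DIM('m) - 1" .
  then have "is_facet G' Q" using face fullQ by (simp add: is_facet_def)
  then show ?thesis using prim valid unfolding FQ_def facet_ineqs_def G'_def mem_Collect_eq prod.case by blast
qed

lemma FQ_ne: "FQ \<noteq> {}" using I_ne ad_FQ by fastforce

lemma shrink_Q: "shrink M Q s = {y. \<forall>(a,b)\<in>FQ. s \<le> a \<bullet> y - b}"
  unfolding shrink_def lattice_dist_def FQ_def[symmetric] using ld_ge_iff[OF FQ_fin FQ_ne] by auto

definition "AQ = {s. s > 0 \<and> shrink M Q s \<noteq> {}}"

lemma AQ_eq: "AQ = {s. s > 0 \<and> (\<exists>y. \<forall>(a,b)\<in>FQ. s \<le> a \<bullet> y - b)}"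
  unfolding AQ_def shrink_Q by auto

lemma I_lift: assumes "\<forall>(a,b)\<in>FQ. s \<le> a \<bullet> y - b" "(a,b) \<in> I"
  shows "s \<le> a \<bullet> g y - b"
proof -
  have "s \<le> ad a \<bullet> y - b" using assms ad_FQ by blast
  also have "ad a \<bullet> y = ad a \<bullet> \<pi> (g y)" by (simp add: g_props)
  also have "\<dots> = a \<bullet> g y" by (rule key[OF assms(2)])
  finally show ?thesis .
qed

lemma AQ_le: "s \<in> AQ \<Longrightarrow> s \<le> sstar"
proof -
  assume "s \<in> AQ"
  then obtain y where "\<forall>(a,b)\<in>FQ. s \<le> a \<bullet> y - b" by (auto simp: AQ_eq)
  then have "\<forall>(a,b)\<in>I. s \<le> a \<bullet> g y - b" using I_lift by blast
  then show "s \<le> sstar" by (rule F2a)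
qed

lemma AQ_bdd: "bdd_above AQ" unfolding bdd_above_def using AQ_le by blast

lemma c_int: "c \<in> interior P"
proof -
  define V where "V = (\<Inter>p\<in>FP. {z. fst p \<bullet> z > snd p})"
  have "open V" unfolding V_def using FP_fin by (auto intro!: open_INT open_halfspace_gt)
  moreover have "V \<subseteq> P"
  proof
    fix z assume z: "z \<in> V"
    show "z \<in> P" by (subst Prep) (use z in \<open>force simp: V_def\<close>)
  qed
  moreover have "c \<in> V" using c_C sstar_pos by (force simp: V_def C_eq)
  ultimately show ?thesis using interior_maximal by blast
qed

lemma pic_int: "\<pi> c \<in> interior Q"
proof -
  have "open (\<pi> ` interior P)" by (rule open_surjective_linear_image[OF open_interior lin sur])
  moreover have "\<pi> ` interior P \<subseteq> Q" using interior_subset by (auto simp: Q_def)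
  ultimately have "\<pi> ` interior P \<subseteq> interior Q" by (rule interior_maximal[rotated])
  then show ?thesis using c_int by blast
qed

lemma AQ_witness: "\<exists>d>0. d \<in> AQ"
proof -
  let ?y = "\<pi> c"
  let ?V = "(\<lambda>(a, b). a \<bullet> ?y - b) ` FQ"
  define d where "d = Min ?V"
  have pos: "\<forall>v\<in>?V. v > 0" using int_pos[OF _ pic_int] by (auto simp: FQ_def)
  have "d > 0" unfolding d_def using FQ_fin FQ_ne pos by (simp add: Min_gr_iff)
  moreover have "\<forall>(a,b)\<in>FQ. d \<le> a \<bullet> ?y - b"
  proof (clarify)
    fix a b assume "(a,b) \<in> FQ"
    then have "a \<bullet> ?y - b \<in> ?V" by force
    then show "d \<le> a \<bullet> ?y - b" unfolding d_def using FQ_fin by simp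
  qed
  ultimately show ?thesis by (auto simp: AQ_eq)
qed

lemma AQ_ne: "AQ \<noteq> {}" using AQ_witness by auto

lemma SupAQ_pos: "Sup AQ > 0"
proof -
  obtain d where "d > 0" "d \<in> AQ" using AQ_witness by blast
  then have "d \<le> Sup AQ" using cSup_upper[OF _ AQ_bdd] by blast
  with \<open>d > 0\<close> show ?thesis by linarith
qed

lemma SupAQ_le: "Sup AQ \<le> sstar"
  by (rule cSup_least[OF AQ_ne AQ_le])

lemma qcd_Q: "qcodegree M Q = inverse (Sup AQ)"
  by (simp add: qcodegree_def AQ_def)

end


context qset begin

lemma pic_val: assumes ab: "(a,b) \<in> I" shows "ad a \<bullet> \<pi> c = b + sstar"
proof -
  have "a \<bullet> c - b = sstar" using ab by (simp add: I_def)
  then show ?thesis using key[OF ab, of c] by simp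
qed

lemma dir_bound: "\<exists>\<delta>>0. \<forall>v. norm v = 1 \<longrightarrow> (\<exists>(a,b)\<in>I. ad a \<bullet> v \<le> - \<delta>)"
proof (rule ccontr)
  assume H0: "\<not> ?thesis"
  have H: "\<exists>v. norm v = 1 \<and> (\<forall>(a,b)\<in>I. ad a \<bullet> v > - \<delta>)" if d: "\<delta> > 0" for \<delta>
  proof -
    have "\<not> (\<forall>v. norm v = 1 \<longrightarrow> (\<exists>(a,b)\<in>I. ad a \<bullet> v \<le> - \<delta>))"
    proof
      assume A: "\<forall>v. norm v = 1 \<longrightarrow> (\<exists>(a,b)\<in>I. ad a \<bullet> v \<le> - \<delta>)"
      have "\<exists>\<delta>>0. \<forall>v. norm v = 1 \<longrightarrow> (\<exists>(a,b)\<in>I. ad a \<bullet> v \<le> - \<delta>)"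
        by (rule exI[of _ \<delta>], rule conjI[OF d A])
      with H0 show False by contradiction
    qed
    then obtain v where "norm v = 1" "\<not> (\<exists>(a,b)\<in>I. ad a \<bullet> v \<le> - \<delta>)" by blast
    moreover have "\<forall>(a,b)\<in>I. ad a \<bullet> v > - \<delta>"
    proof (clarify)
      fix a b assume "(a,b) \<in> I"
      show "ad a \<bullet> v > - \<delta>"
      proof (rule ccontr)
        assume "\<not> ad a \<bullet> v > - \<delta>"
        then have "ad a \<bullet> v \<le> - \<delta>" by simp
        then have "\<exists>(a,b)\<in>I. ad a \<bullet> v \<le> - \<delta>" using \<open>(a,b) \<in> I\<close> by auto
        with calculation(2) show False by contradiction
      qed
    qed
    ultimately show ?thesis by blast
  qed
  define f where "f \<delta> = {v. \<forall>(a,b)\<in>I. - \<delta> \<le> ad a \<bullet> v}" for \<delta>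
  have cl: "closed (f \<delta>)" for \<delta>
  proof -
    have "f \<delta> = (\<Inter>p\<in>I. {v. ad (fst p) \<bullet> v \<ge> - \<delta>})" by (force simp: f_def)
    then show ?thesis by (auto intro!: closed_INT closed_halfspace_ge)
  qed
  have "sphere (0::'m) 1 \<inter> (\<Inter>\<delta>\<in>{\<delta>. \<delta> > 0}. f \<delta>) \<noteq> {}"
  proof (rule compact_imp_fip_image[OF compact_sphere cl])
    fix D' :: "real set" assume D': "finite D'" "D' \<subseteq> {\<delta>. \<delta> > 0}"
    show "sphere 0 1 \<inter> (\<Inter>\<delta>\<in>D'. f \<delta>) \<noteq> {}"
    proof (cases "D' = {}")
      case True
      obtain e :: 'm where "e \<in> Basis" using nonempty_Basis by blast
      then have "e \<in> sphere 0 1" by simp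
      then show ?thesis using True by auto
    next
      case False
      define m where "m = Min D'"
      have "m \<in> D'" unfolding m_def using D'(1) False by (rule Min_in)
      then have m: "m > 0" using D'(2) by blast
      from H[OF m] obtain v where vv: "norm v = 1 \<and> (\<forall>(a,b)\<in>I. ad a \<bullet> v > - m)" ..
      note v = conjunct1[OF vv] conjunct2[OF vv]
      have "v \<in> f \<delta>" if "\<delta> \<in> D'" for \<delta>
      proof -
        have "m \<le> \<delta>" using that D'(1) unfolding m_def by (rule Min_le[rotated])
        show ?thesis unfolding f_def
        proof (clarify)
          fix a b assume "(a,b) \<in> I"
          then have "ad a \<bullet> v > - m" using v(2) by blast
          then show "- \<delta> \<le> ad a \<bullet> v" using \<open>m \<le> \<delta>\<close> by simp
        qed
      qed
      moreover have "v \<in> sphere 0 1" using v(1) by simp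
      ultimately show ?thesis by blast
    qed
  qed
  then obtain v where v0: "v \<in> sphere 0 1 \<inter> (\<Inter>\<delta>\<in>{\<delta>. \<delta> > 0}. f \<delta>)" by (meson ex_in_conv)
  then have v: "norm v = 1" "\<And>\<delta>. \<delta> > 0 \<Longrightarrow> v \<in> f \<delta>" by auto
  have nn: "ad a \<bullet> v \<ge> 0" if "(a,b) \<in> I" for a b
  proof (rule ccontr)
    assume "\<not> ad a \<bullet> v \<ge> 0"
    then have "- (ad a \<bullet> v) / 2 > 0" by simp
    then have "v \<in> f (- (ad a \<bullet> v) / 2)" by (rule v(2))
    then have "\<forall>(a',b')\<in>I. - (- (ad a \<bullet> v) / 2) \<le> ad a' \<bullet> v"
      unfolding f_def by simp
    then have "- (- (ad a \<bullet> v) / 2) \<le> ad a \<bullet> v" using that by blast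
    then have "ad a \<bullet> v / 2 \<le> ad a \<bullet> v" by simp
    with \<open>\<not> ad a \<bullet> v \<ge> 0\<close> show False by simp
  qed
  define w where "w = g v"
  have "\<forall>(a,b)\<in>I. sstar \<le> a \<bullet> (c + w) - b"
  proof (clarify)
    fix a b assume ab: "(a,b) \<in> I"
    have "a \<bullet> c - b = sstar" using ab by (auto simp: I_def)
    moreover have "a \<bullet> w = ad a \<bullet> v" using key[OF ab, of w] by (simp add: w_def g_props)
    ultimately show "sstar \<le> a \<bullet> (c + w) - b" using nn[OF ab] by (simp add: inner_add_right)
  qed
  then have "c + w \<in> affine hull C" by (rule F2b)
  then have "\<pi> (c + w) = \<pi> c" using aff_diff hull_inc[OF c_C] by blast
  then have "\<pi> w = 0" using lin by (simp add: linear_add)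
  then have "v = 0" by (simp add: w_def g_props)
  with v(1) show False by simp
qed

lemma bounded_I: "\<exists>R. \<forall>y. (\<forall>(a,b)\<in>I. b \<le> ad a \<bullet> y) \<longrightarrow> norm (y - \<pi> c) \<le> R"
proof -
  from dir_bound obtain \<delta> where \<delta>0: "\<delta> > 0 \<and> (\<forall>v. norm v = 1 \<longrightarrow> (\<exists>(a,b)\<in>I. ad a \<bullet> v \<le> - \<delta>))" ..
  have \<delta>: "\<delta> > 0" "\<And>v. norm v = 1 \<Longrightarrow> \<exists>(a,b)\<in>I. ad a \<bullet> v \<le> - \<delta>"
    using \<delta>0 by auto
  have "norm (y - \<pi> c) \<le> sstar / \<delta>" if y: "\<forall>(a,b)\<in>I. b \<le> ad a \<bullet> y" for y
  proof (cases "y = \<pi> c")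
    case True then show ?thesis using sstar_pos \<delta> by simp
  next
    case False
    define r where "r = norm (y - \<pi> c)"
    have r: "r > 0" using False by (simp add: r_def)
    define v where "v = (1 / r) *\<^sub>R (y - \<pi> c)"
    have "norm v = 1" using r by (simp add: v_def r_def)
    then have "\<exists>(a,b)\<in>I. ad a \<bullet> v \<le> - \<delta>" by (rule \<delta>(2))
    then obtain p where p: "p \<in> I" "ad (fst p) \<bullet> v \<le> - \<delta>" by (auto simp: case_prod_beta)
    define a where "a = fst p"
    define b where "b = snd p"
    have ab: "(a,b) \<in> I" "ad a \<bullet> v \<le> - \<delta>" using p by (simp_all add: a_def b_def)
    have yv: "y = \<pi> c + r *\<^sub>R v" using r by (simp add: v_def)
    have "b \<le> ad a \<bullet> y" using y ab(1) by blast
    also have "ad a \<bullet> y = b + sstar + r * (ad a \<bullet> v)"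
      unfolding yv using pic_val[OF ab(1)] by (simp add: inner_add_right)
    finally have "r * (- (ad a \<bullet> v)) \<le> sstar" by (simp add: algebra_simps)
    moreover have "r * \<delta> \<le> r * (- (ad a \<bullet> v))" using ab(2) r by (intro mult_left_mono) auto
    ultimately have "r * \<delta> \<le> sstar" by linarith
    then show ?thesis using \<delta>(1) by (simp add: r_def pos_le_divide_eq)
  qed
  then show ?thesis by blast
qed

lemma Q_attained: "\<exists>y. \<forall>(a,b)\<in>FQ. Sup AQ \<le> a \<bullet> y - b"
proof -
  obtain R where R: "\<And>y. \<forall>(a,b)\<in>I. b \<le> ad a \<bullet> y \<Longrightarrow> norm (y - \<pi> c) \<le> R"
    using bounded_I by blast
  have "\<exists>y\<in>cball (\<pi> c) R. \<forall>(a,b)\<in>FQ. Sup AQ \<le> a \<bullet> y - b"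
  proof (rule sup_attained[OF compact_cball AQ_eq AQ_ne AQ_bdd])
    fix s y assume s: "s \<in> AQ" and y: "\<forall>(a,b)\<in>FQ. s \<le> a \<bullet> y - b"
    have "s > 0" using s by (simp add: AQ_eq)
    have "\<forall>(a,b)\<in>I. b \<le> ad a \<bullet> y"
    proof (clarify)
      fix a b assume "(a,b) \<in> I"
      then have "(ad a, b) \<in> FQ" by (rule ad_FQ)
      then have "s \<le> ad a \<bullet> y - b" using y by blast
      with \<open>s > 0\<close> show "b \<le> ad a \<bullet> y" by simp
    qed
    then have "norm (y - \<pi> c) \<le> R" by (rule R)
    then show "y \<in> cball (\<pi> c) R" by (simp add: dist_norm norm_minus_commute)
  qed
  then show ?thesis by blast
qed

lemma core_Q_sub: "\<forall>(a,b)\<in>FQ. sstar \<le> a \<bullet> y - b \<Longrightarrow> y = \<pi> c"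
proof -
  assume h: "\<forall>(a,b)\<in>FQ. sstar \<le> a \<bullet> y - b"
  then have "\<forall>(a,b)\<in>I. sstar \<le> a \<bullet> g y - b" using I_lift by blast
  then have "g y \<in> affine hull C" by (rule F2b)
  then have "\<pi> (g y) = \<pi> c" using aff_diff hull_inc[OF c_C] by blast
  then show "y = \<pi> c" by (simp add: g_props)
qed

lemma main_ineq: "qcodegree M Q \<ge> qcodegree int_lattice P"
  unfolding qcd_Q qcd_P using SupAQ_pos SupAQ_le by (simp add: le_imp_inverse_le)

lemma main_eq:
  assumes "qcodegree M Q = qcodegree int_lattice P"
  shows "\<pi> ` core int_lattice P = {\<pi> c} \<and> core M Q = {\<pi> c}"
proof
  have sup: "Sup AQ = sstar" using assms unfolding qcd_Q qcd_P by simp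
  show "\<pi> ` core int_lattice P = {\<pi> c}"
  proof
    show "\<pi> ` core int_lattice P \<subseteq> {\<pi> c}"
    proof
      fix y assume "y \<in> \<pi> ` core int_lattice P"
      then obtain x where x: "x \<in> C" "y = \<pi> x" by (auto simp: C_def)
      have "\<pi> x = \<pi> c" by (rule aff_diff[OF hull_inc[OF x(1)] hull_inc[OF c_C]])
      then show "y \<in> {\<pi> c}" using x by simp
    qed
    show "{\<pi> c} \<subseteq> \<pi> ` core int_lattice P" using c_C by (simp add: C_def)
  qed
  have cQ: "core M Q = {y. \<forall>(a,b)\<in>FQ. sstar \<le> a \<bullet> y - b}"
    unfolding core_def qcd_Q sup using sstar_pos by (simp add: shrink_Q divide_inverse)
  from Q_attained obtain y0 where y0': "\<forall>(a,b)\<in>FQ. Sup AQ \<le> a \<bullet> y0 - b" ..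
  then have y0: "\<forall>(a,b)\<in>FQ. sstar \<le> a \<bullet> y0 - b" by (simp only: sup)
  have "y0 = \<pi> c" using y0 by (rule core_Q_sub)
  show "core M Q = {\<pi> c}"
  proof
    show "core M Q \<subseteq> {\<pi> c}" unfolding cQ using core_Q_sub by blast
    show "{\<pi> c} \<subseteq> core M Q" unfolding cQ using y0 \<open>y0 = \<pi> c\<close> by simp
  qed
qed

end


theorem proposition2p3:
  fixes P :: "(real^'n) set" and \<pi> :: "real^'n \<Rightarrow> 'm::euclidean_space"
  assumes "rational_polytope int_lattice P"
    and "aff_dim P = int CARD('n)"
    and "linear \<pi>" and "surj \<pi>"
    and "{x. \<pi> x = 0} = core_dir P"
  shows "rational_polytope (\<pi> ` int_lattice) (\<pi> ` P)
    \<and> qcodegree (\<pi> ` int_lattice) (\<pi> ` P) \<ge> qcodegree int_lattice P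
    \<and> (qcodegree (\<pi> ` int_lattice) (\<pi> ` P) = qcodegree int_lattice P \<longrightarrow>
        (\<exists>q. \<pi> ` core int_lattice P = {q} \<and> core (\<pi> ` int_lattice) (\<pi> ` P) = {q}))"
proof -
  obtain S where S: "finite S" "P = convex hull S"
    and Sk: "\<And>v. v \<in> S \<Longrightarrow> \<exists>k::nat. k > 0 \<and> real k *\<^sub>R v \<in> int_lattice"
    using assms(1) unfolding rational_polytope_def by blast
  have rat: "v $ i \<in> \<rat>" if v: "v \<in> S" for v i
  proof -
    obtain k :: nat where k: "k > 0" "real k *\<^sub>R v \<in> int_lattice" using Sk[OF v] by blast
    then have "real k * v $ i \<in> \<int>" by (simp add: int_lattice_def)
    then have "real k * v $ i \<in> \<rat>" using Ints_subset_Rats by blast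
    then have "(real k * v $ i) / real k \<in> \<rat>" by (rule Rats_divide) simp
    moreover have "(real k * v $ i) / real k = v $ i" using k(1) by simp
    ultimately show ?thesis by simp
  qed
  have ps: "pset P S"
  proof (rule pset.intro)
    show "finite S" "P = convex hull S" by (fact S(1), fact S(2))
    show "\<And>v i. v \<in> S \<Longrightarrow> v $ i \<in> \<rat>" by (fact rat)
    show "aff_dim P = int CARD('n)" by (fact assms(2))
  qed
  interpret qset P S \<pi>
    by (rule qset.intro[OF ps], rule qset_axioms.intro) (fact assms(3), fact assms(4), fact assms(5))
  have R1: "rational_polytope (\<pi> ` int_lattice) (\<pi> ` P)"
    unfolding rational_polytope_def
  proof (intro exI[of _ "\<pi> ` S"] conjI ballI)
    show "finite (\<pi> ` S)" using S(1) by simp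
    show "\<pi> ` P = convex hull (\<pi> ` S)" using Q_hull by (simp add: Q_def)
    fix w assume "w \<in> \<pi> ` S"
    then obtain v where v: "v \<in> S" "w = \<pi> v" by blast
    obtain k :: nat where k: "k > 0" "real k *\<^sub>R v \<in> int_lattice" using Sk[OF v(1)] by blast
    have "real k *\<^sub>R w = \<pi> (real k *\<^sub>R v)" using v(2) assms(3) by (simp add: linear_scale)
    then show "\<exists>k::nat. k > 0 \<and> real k *\<^sub>R w \<in> \<pi> ` int_lattice" using k by blast
  qed
  have R2: "qcodegree (\<pi> ` int_lattice) (\<pi> ` P) \<ge> qcodegree int_lattice P"
    using main_ineq by (simp add: M_def Q_def)
  have R3: "\<exists>q. \<pi> ` core int_lattice P = {q} \<and> core (\<pi> ` int_lattice) (\<pi> ` P) = {q}"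
    if "qcodegree (\<pi> ` int_lattice) (\<pi> ` P) = qcodegree int_lattice P"
  proof -
    have "qcodegree M Q = qcodegree int_lattice P" using that by (simp add: M_def Q_def)
    then have "\<pi> ` core int_lattice P = {\<pi> c} \<and> core M Q = {\<pi> c}" by (rule main_eq)
    then show ?thesis by (auto simp: M_def Q_def)
  qed
  show ?thesis using R1 R2 R3 by blast
qed

end
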